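(* Let $(X,|\cdot|)$ be a Euclidean plane and $\|\cdot\|$ a norm on $X$ with $\|\cdot\|\le|\cdot|$. Let $E$ be the unit ball of $|\cdot|$ and $B$ the unit ball of $\|\cdot\|$. Then $E$ is the John ellipse of $B$ if and only if there exist $v_0,v_1,v_2\in X$ with $|v_i|=\|v_i\|=1$ for $i=0,1,2$ and $\langle v_i,v_{i+1}\rangle\ge0$ for $i=0,1,2$, where $v_3:=-v_0$.
   Context: For a compact convex centrally symmetric set $B\subset\mathbb{R}^2$ with the origin in its interior, the John ellipse of $B$ is the unique ellipse of maximal area contained in $B$. $\langle\cdot,\cdot\rangle$ is the inner product inducing $|\cdot|$. *)

theory Defs
  imports "HOL-Analysis.Analysis"
begin

definition is_norm :: "('a::real_vector \<Rightarrow> real) \<Rightarrow> bool" where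
  "is_norm N \<longleftrightarrow>
     (\<forall>x. 0 \<le> N x) \<and> (\<forall>x. N x = 0 \<longleftrightarrow> x = 0) \<and>
     (\<forall>a x. N (a *\<^sub>R x) = \<bar>a\<bar> * N x) \<and>
     (\<forall>x y. N (x + y) \<le> N x + N y)"

definition is_ellipse :: "'a::euclidean_space set \<Rightarrow> bool" where
  "is_ellipse F \<longleftrightarrow>
     (\<exists>c f. linear f \<and> inj f \<and> F = (\<lambda>x. c + f x) ` cball (0::'a) 1)"

text \<open>E is the John ellipse of B: an ellipse contained in B of maximal area among
  all ellipses contained in B (the maximiser is unique by John's theorem).\<close>
definition is_john_ellipse :: "'a::euclidean_space set \<Rightarrow> 'a set \<Rightarrow> bool" where
  "is_john_ellipse B E \<longleftrightarrow>
     is_ellipse E \<and> E \<subseteq> B \<and>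
     (\<forall>F. is_ellipse F \<and> F \<subseteq> B \<longrightarrow> measure lebesgue F \<le> measure lebesgue E)"

end

theory Submission
  imports Defs
begin


lemma isn_neg: "is_norm N \<Longrightarrow> N (- x) = N x"
  unfolding is_norm_def by (metis abs_minus_cancel abs_one mult_1 scaleR_minus1_left)

lemma isn_scale: "is_norm N \<Longrightarrow> N (a *\<^sub>R x) = \<bar>a\<bar> * N x"
  unfolding is_norm_def by blast

lemma isn_tri: "is_norm N \<Longrightarrow> N (x + y) \<le> N x + N y"
  unfolding is_norm_def by blast

lemma isn_nonneg: "is_norm N \<Longrightarrow> 0 \<le> N x"
  unfolding is_norm_def by blast

lemma isn_diff: "is_norm N \<Longrightarrow> N (x - y) \<le> N x + N y"
  using isn_tri[of N x "-y"] isn_neg[of N y] by simp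

lemma isn_lip: "is_norm N \<Longrightarrow> (\<And>x. N x \<le> norm x) \<Longrightarrow> \<bar>N x - N y\<bar> \<le> norm (x - y)"
proof -
  assume n: "is_norm N" and le: "\<And>x. N x \<le> norm x"
  have "N x \<le> N (x - y) + N y" using isn_tri[OF n, of "x-y" y] by simp
  moreover have "N y \<le> N (y - x) + N x" using isn_tri[OF n, of "y-x" x] by simp
  moreover have "N (y - x) = N (x - y)" using isn_neg[OF n, of "x-y"] by simp
  ultimately have "\<bar>N x - N y\<bar> \<le> N (x - y)" by linarith
  also have "\<dots> \<le> norm (x - y)" by (rule le)
  finally show ?thesis .
qed

lemma isn_cont: "is_norm N \<Longrightarrow> (\<And>x. N x \<le> norm x) \<Longrightarrow> continuous_on S N"
  unfolding continuous_on_iff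
  apply (intro ballI allI impI)
  subgoal for x e
    apply (rule exI[of _ e]) apply simp
    by (metis dist_norm dist_real_def isn_lip le_less_trans)
  done

lemma contact_support:
  fixes v y :: "'a::real_inner"
  assumes n: "is_norm N" and le: "\<And>x. N x \<le> norm x" and nv: "norm v = 1" and Nv: "N v = 1"
  shows "v \<bullet> y \<le> N y"
proof (rule ccontr)
  assume "\<not> v \<bullet> y \<le> N y"
  then have lt: "N y < v \<bullet> y" by simp
  define a where "a = v \<bullet> y"
  define m where "m = N y"
  define k where "k = norm y ^ 2"
  have m0: "0 \<le> m" using isn_nonneg[OF n] m_def by simp
  have mk: "m \<le> norm y" using le m_def by simp
  have ak: "a \<le> norm y" using norm_cauchy_schwarz[of v y] nv a_def by simp
  have am: "m < a" using lt a_def m_def by simp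
  define t where "t = (a - m) / (k + 1)"
  have k0: "0 \<le> k" using k_def by simp
  have t0: "0 < t" using am k0 t_def by simp
  have "t * m \<le> t * norm y" using t0 mk by simp
  have tm1: "t * m < 1"
  proof -
    have e: "t * m = (a - m) * m / (k + 1)" using t_def by simp
    have "(a - m) * m \<le> a * m" using m0 by (simp add: mult_right_mono)
    also have "a * m \<le> norm y * norm y" using ak mk m0 by (intro mult_mono) auto
    finally have "(a - m) * m \<le> norm y * norm y" .
    then have "(a - m) * m / (k + 1) \<le> norm y * norm y / (k+1)" using k0 by (simp add: divide_right_mono)
    also have "norm y * norm y / (k+1) = k / (k+1)" by (simp add: k_def power2_eq_square)
    also have "k / (k+1) < 1" using k0 by simp
    finally show ?thesis using e by simp
  qed
  have nsq: "(norm (v - t *\<^sub>R y))^2 = 1 - 2 * t * a + t^2 * k"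
    unfolding power2_norm_eq_inner k_def a_def using nv
    by (simp add: inner_diff_left inner_diff_right algebra_simps power2_eq_square dot_square_norm[symmetric] norm_eq_1 inner_commute)
  have "t * k < a - m" using t_def am k0 t0
    by (simp add: field_simps)
  then have "t * t * k < t * (a - m)" using t0 by simp
  moreover have "t * t * m * m \<ge> 0" using m0 by simp
  moreover have "m * t < a * t" using am t0 by simp
  ultimately have "1 - 2 * t * a + t^2 * k < (1 - t * m)^2"
    by (simp add: power2_eq_square algebra_simps)
  then have "(norm (v - t *\<^sub>R y))^2 < (1 - t * m)^2" using nsq by simp
  then have lt2: "norm (v - t *\<^sub>R y) < 1 - t * m" using tm1
    by (smt (verit) power_mono norm_ge_zero)
  have "1 = N v" using Nv by simp
  also have "N v \<le> N (v - t *\<^sub>R y) + N (t *\<^sub>R y)" using isn_tri[OF n, of "v - t *\<^sub>R y" "t *\<^sub>R y"] by simp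
  also have "N (t *\<^sub>R y) = t * m" using isn_scale[OF n] t0 m_def by simp
  also have "N (v - t *\<^sub>R y) \<le> norm (v - t *\<^sub>R y)" by (rule le)
  finally show False using lt2 by simp
qed

lemma ellipse_sym:
  assumes n: "is_norm N" and lin: "linear f"
    and sub: "(\<lambda>x. c + f x) ` cball 0 1 \<subseteq> {x. N x \<le> 1}" and x: "norm x \<le> 1"
  shows "N (f x) \<le> 1"
proof -
  have "c + f x \<in> (\<lambda>x. c + f x) ` cball 0 1" using x by simp
  then have "N (c + f x) \<le> 1" using sub by blast
  moreover have "c + f (-x) \<in> (\<lambda>x. c + f x) ` cball 0 1" using x by simp
  then have "N (c + f (-x)) \<le> 1" using sub by blast
  then have "N (c - f x) \<le> 1" using linear_neg[OF lin] by simp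
  moreover have "2 *\<^sub>R f x = (c + f x) - (c - f x)" by (simp add: scaleR_2)
  then have "N (2 *\<^sub>R f x) \<le> N (c + f x) + N (c - f x)" using isn_diff[OF n] by metis
  ultimately show ?thesis using isn_scale[OF n, of 2 "f x"] by simp
qed



lemma id1: "(a1*b2 - b1*a2)*(a1*a2+b1*b2)*(a0^2 - b0^2) + (a2*b0 - b2*a0)*(a2*a0+b2*b0)*(a1^2 - b1^2)
   + (a0*b1 - b0*a1)*(a0*a1+b0*b1)*(a2^2 - b2^2) = (0::real)"
  by (simp add: algebra_simps power2_eq_square)

lemma id2: "(a1*b2 - b1*a2)*(a1*a2+b1*b2)*(a0*b0) + (a2*b0 - b2*a0)*(a2*a0+b2*b0)*(a1*b1)
   + (a0*b1 - b0*a1)*(a0*a1+b0*b1)*(a2*b2) = (0::real)"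
  by (simp add: algebra_simps power2_eq_square)

lemma lagr: "((a*A1+b*A2)^2 + (a*B1+b*B2)^2) * ((c*A1+d*A2)^2 + (c*B1+d*B2)^2)
   - ((a*A1+b*A2)*(c*A1+d*A2) + (a*B1+b*B2)*(c*B1+d*B2))^2 = (A1*B2 - B1*A2)^2 * (a*d-b*c)^2"
  for a b c d A1 A2 B1 B2 :: real
  by (simp add: algebra_simps power2_eq_square)

lemma orth_case:
  fixes a b c d A1 A2 B1 B2 :: real
  assumes "a^2+b^2 = 1" "c^2+d^2=1" "a*c+b*d = 0"
    and "(a*A1+b*A2)^2 + (a*B1+b*B2)^2 \<le> 1" "(c*A1+d*A2)^2 + (c*B1+d*B2)^2 \<le> 1"
  shows "\<bar>A1*B2 - B1*A2\<bar> \<le> 1"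
proof -
  have "(a*c+b*d)^2 + (a*d-b*c)^2 = (a^2+b^2)*(c^2+d^2)" by (simp add: algebra_simps power2_eq_square)
  then have x: "(a*d-b*c)^2 = 1" using assms by simp
  have "(A1*B2 - B1*A2)^2 \<le> ((a*A1+b*A2)^2 + (a*B1+b*B2)^2) * ((c*A1+d*A2)^2 + (c*B1+d*B2)^2)"
  proof -
    have "(A1*B2 - B1*A2)^2 = ((a*A1+b*A2)^2 + (a*B1+b*B2)^2) * ((c*A1+d*A2)^2 + (c*B1+d*B2)^2)
   - ((a*A1+b*A2)*(c*A1+d*A2) + (a*B1+b*B2)*(c*B1+d*B2))^2"
      using lagr[of a A1 b A2 B1 B2 c d] x by simp
    moreover have "0 \<le> ((a*A1+b*A2)*(c*A1+d*A2) + (a*B1+b*B2)*(c*B1+d*B2))^2" by simp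
    ultimately show ?thesis by linarith
  qed
  also have "\<dots> \<le> 1 * 1" using assms(4,5) by (intro mult_mono) auto
  finally have "(A1*B2 - B1*A2)^2 \<le> 1^2" by simp
  then show ?thesis using abs_le_square_iff by (metis abs_one)
qed

lemma Q_expand: "(a*A1+b*A2)^2 + (a*B1+b*B2)^2 =
   ((A1^2+B1^2) + (A2^2+B2^2))/2 * (a^2+b^2) + ((A1^2+B1^2) - (A2^2+B2^2))/2 * (a^2-b^2)
   + (A1*A2+B1*B2) * (2*(a*b))" for a b A1 A2 B1 B2 :: real
  by (simp add: power2_eq_square field_simps)

lemma key_det:
  fixes a0 b0 a1 b1 a2 b2 A1 A2 B1 B2 :: real
  assumes u0: "a0^2+b0^2 = 1" and u1: "a1^2+b1^2 = 1" and u2: "a2^2+b2^2 = 1"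
    and d01: "a0*a1+b0*b1 \<ge> 0" and d12: "a1*a2+b1*b2 \<ge> 0" and d20: "a2*a0+b2*b0 \<le> 0"
    and Q0: "(a0*A1+b0*A2)^2 + (a0*B1+b0*B2)^2 \<le> 1"
    and Q1: "(a1*A1+b1*A2)^2 + (a1*B1+b1*B2)^2 \<le> 1"
    and Q2: "(a2*A1+b2*A2)^2 + (a2*B1+b2*B2)^2 \<le> 1"
  shows "\<bar>A1*B2 - B1*A2\<bar> \<le> 1"
proof (cases "a0*a1+b0*b1 = 0 \<or> a1*a2+b1*b2 = 0 \<or> a2*a0+b2*b0 = 0")
  case True
  then show ?thesis
  proof (elim disjE)
    assume "a0*a1+b0*b1 = 0" then show ?thesis using orth_case[OF u0 u1 _ Q0 Q1] by simp
  next
    assume "a1*a2+b1*b2 = 0" then show ?thesis using orth_case[OF u1 u2 _ Q1 Q2] by simp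
  next
    assume "a2*a0+b2*b0 = 0" then show ?thesis using orth_case[OF u2 u0 _ Q2 Q0] by simp
  qed
next
  case False
  define x01 where "x01 = a0*b1 - b0*a1"
  define x02 where "x02 = a0*b2 - b0*a2"
  define x12 where "x12 = a1*b2 - b1*a2"
  define e01 where "e01 = a0*a1+b0*b1"
  define e02 where "e02 = a0*a2+b0*b2"
  define e12 where "e12 = a1*a2+b1*b2"
  have p01: "e01 > 0" using False d01 e01_def by auto
  have p12: "e12 > 0" using False d12 e12_def by auto
  have n02: "e02 < 0" using False d20 e02_def by (auto simp: mult.commute)
  have r1: "e12 = e01*e02 + x01*x02"
  proof -
    have "e01*e02 + x01*x02 = (a0^2+b0^2)*(a1*a2+b1*b2)"
      unfolding e01_def e02_def x01_def x02_def by (simp add: algebra_simps power2_eq_square)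
    then show ?thesis using u0 e12_def by simp
  qed
  have r2: "x12 = e01*x02 - x01*e02"
  proof -
    have "e01*x02 - x01*e02 = (a0^2+b0^2)*(a1*b2 - b1*a2)"
      unfolding e01_def e02_def x01_def x02_def by (simp add: algebra_simps power2_eq_square)
    then show ?thesis using u0 x12_def by simp
  qed
  define c0 where "c0 = x12 * e12"
  define c1 where "c1 = (- x02) * e02"
  define c2 where "c2 = x01 * e01"
  define P where "P = A1^2+B1^2"
  define Qq where "Qq = A2^2+B2^2"
  define R where "R = A1*A2+B1*B2"
  define T where "T = P + Qq"
  have QQ: "(a*A1+b*A2)^2 + (a*B1+b*B2)^2 = T/2 + (P - Qq)/2 * (a^2-b^2) + R * (2*(a*b))"
    if "a^2+b^2 = 1" for a b
    using Q_expand[of a A1 b A2 B1 B2] that unfolding T_def P_def Qq_def R_def by simp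
  have S1: "c0*(a0^2-b0^2) + c1*(a1^2-b1^2) + c2*(a2^2-b2^2) = 0"
    using id1[of a1 b2 b1 a2 a0 b0] unfolding c0_def c1_def c2_def x12_def e12_def x02_def e02_def x01_def e01_def
    by (simp add: algebra_simps)
  have S2: "c0*(a0*b0) + c1*(a1*b1) + c2*(a2*b2) = 0"
    using id2[of a1 b2 b1 a2 a0 b0] unfolding c0_def c1_def c2_def x12_def e12_def x02_def e02_def x01_def e01_def
    by (simp add: algebra_simps)
  have ID: "c0 * ((a0*A1+b0*A2)^2 + (a0*B1+b0*B2)^2) + c1 * ((a1*A1+b1*A2)^2 + (a1*B1+b1*B2)^2)
      + c2 * ((a2*A1+b2*A2)^2 + (a2*B1+b2*B2)^2) = (c0+c1+c2) * (T/2)"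
  proof -
    have "c0 * ((a0*A1+b0*A2)^2 + (a0*B1+b0*B2)^2) + c1 * ((a1*A1+b1*A2)^2 + (a1*B1+b1*B2)^2)
      + c2 * ((a2*A1+b2*A2)^2 + (a2*B1+b2*B2)^2) =
      (c0+c1+c2) * (T/2) + (P - Qq)/2 * (c0*(a0^2-b0^2) + c1*(a1^2-b1^2) + c2*(a2^2-b2^2))
       + 2 * R * (c0*(a0*b0) + c1*(a1*b1) + c2*(a2*b2))"
      unfolding QQ[OF u0] QQ[OF u1] QQ[OF u2] by (simp add: algebra_simps)
    then show ?thesis using S1 S2 by simp
  qed
  have x01nz: "x01 \<noteq> 0"
  proof
    assume "x01 = 0"
    then have "e12 = e01*e02" using r1 by simp
    moreover have "e01*e02 < 0" using p01 n02 by (simp add: mult_pos_neg)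
    ultimately show False using p12 by simp
  qed
  have T2: "T \<le> 2"
  proof (cases "x01 > 0")
    case True
    have "x02 \<ge> 0"
    proof (rule ccontr)
      assume "\<not> x02 \<ge> 0"
      then have "x01*x02 < 0" using True by (simp add: mult_pos_neg)
      moreover have "e01*e02 < 0" using p01 n02 by (simp add: mult_pos_neg)
      ultimately show False using r1 p12 by simp
    qed
    then have "e01*x02 \<ge> 0" using p01 by simp
    moreover have "x01*e02 < 0" using True n02 by (simp add: mult_pos_neg)
    ultimately have "x12 > 0" using r2 by linarith
    have c0p: "c0 > 0" using \<open>x12 > 0\<close> p12 c0_def by simp
    have c1p: "c1 \<ge> 0" unfolding c1_def using \<open>x02 \<ge> 0\<close> n02 by (intro mult_nonpos_nonpos) auto
    have c2p: "c2 > 0" using True p01 c2_def by simp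
    have "c0*((a0*A1+b0*A2)^2 + (a0*B1+b0*B2)^2) + c1*((a1*A1+b1*A2)^2 + (a1*B1+b1*B2)^2)
        + c2*((a2*A1+b2*A2)^2 + (a2*B1+b2*B2)^2) \<le> c0 * 1 + c1 * 1 + c2 * 1"
    proof -
      have "c0*((a0*A1+b0*A2)^2 + (a0*B1+b0*B2)^2) \<le> c0 * 1" using c0p Q0 by (simp only: mult_left_mono less_imp_le)
      moreover have "c1*((a1*A1+b1*A2)^2 + (a1*B1+b1*B2)^2) \<le> c1 * 1" using c1p Q1 by (simp only: mult_left_mono)
      moreover have "c2*((a2*A1+b2*A2)^2 + (a2*B1+b2*B2)^2) \<le> c2 * 1" using c2p Q2 by (simp only: mult_left_mono less_imp_le)
      ultimately show ?thesis by linarith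
    qed
    then have "(c0+c1+c2) * (T/2) \<le> (c0+c1+c2) * 1" using ID by simp
    moreover have "c0+c1+c2 > 0" using c0p c1p c2p by simp
    ultimately have "T/2 \<le> 1" by (rule mult_left_le_imp_le)
    then show ?thesis by simp
  next
    case False
    then have nx: "x01 < 0" using x01nz by simp
    have "x02 \<le> 0"
    proof (rule ccontr)
      assume "\<not> x02 \<le> 0"
      then have "x01*x02 < 0" using nx by (simp add: mult_neg_pos)
      moreover have "e01*e02 < 0" using p01 n02 by (simp add: mult_pos_neg)
      ultimately show False using r1 p12 by simp
    qed
    then have "e01*x02 \<le> 0" using p01 by (simp add: mult_nonneg_nonpos)
    moreover have "x01*e02 > 0" using nx n02 by (simp add: mult_neg_neg)
    ultimately have "x12 < 0" using r2 by linarith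
    have c0p: "c0 < 0" using \<open>x12 < 0\<close> p12 c0_def by (simp add: mult_neg_pos)
    have c1p: "c1 \<le> 0" unfolding c1_def using \<open>x02 \<le> 0\<close> n02 by (intro mult_nonneg_nonpos) auto
    have c2p: "c2 < 0" using nx p01 c2_def by (simp add: mult_neg_pos)
    have "(-c0)*((a0*A1+b0*A2)^2 + (a0*B1+b0*B2)^2) + (-c1)*((a1*A1+b1*A2)^2 + (a1*B1+b1*B2)^2)
        + (-c2)*((a2*A1+b2*A2)^2 + (a2*B1+b2*B2)^2) \<le> (-c0) * 1 + (-c1) * 1 + (-c2) * 1"
    proof -
      have "(-c0)*((a0*A1+b0*A2)^2 + (a0*B1+b0*B2)^2) \<le> (-c0) * 1" using c0p Q0 by (intro mult_left_mono) auto
      moreover have "(-c1)*((a1*A1+b1*A2)^2 + (a1*B1+b1*B2)^2) \<le> (-c1) * 1" using c1p Q1 by (intro mult_left_mono) auto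
      moreover have "(-c2)*((a2*A1+b2*A2)^2 + (a2*B1+b2*B2)^2) \<le> (-c2) * 1" using c2p Q2 by (intro mult_left_mono) auto
      ultimately show ?thesis by linarith
    qed
    moreover have "(-(c0+c1+c2)) * (T/2) = - (c0 * ((a0*A1+b0*A2)^2 + (a0*B1+b0*B2)^2) + c1 * ((a1*A1+b1*A2)^2 + (a1*B1+b1*B2)^2)
      + c2 * ((a2*A1+b2*A2)^2 + (a2*B1+b2*B2)^2))" unfolding minus_mult_left by (simp only: ID)
    ultimately have "(-(c0+c1+c2)) * (T/2) \<le> (-(c0+c1+c2)) * 1" by (simp add: algebra_simps)
    moreover have "-(c0+c1+c2) > 0" using c0p c1p c2p by simp
    ultimately have "T/2 \<le> 1" by (rule mult_left_le_imp_le)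
    then show ?thesis by simp
  qed
  have Pn: "P \<ge> 0" "Qq \<ge> 0" using P_def Qq_def by auto
  have "(A1*B2 - B1*A2)^2 = P*Qq - R^2" unfolding P_def Qq_def R_def by (simp add: algebra_simps power2_eq_square)
  also have "\<dots> \<le> P * Qq" by simp
  also have "\<dots> \<le> (T/2)^2"
  proof -
    have "0 \<le> ((P - Qq)/2)^2" by simp
    then show ?thesis unfolding T_def by (simp add: power2_eq_square algebra_simps)
  qed
  also have "\<dots> \<le> 1" using T2 Pn T_def by (intro power_le_one) auto
  finally have "(A1*B2 - B1*A2)^2 \<le> 1^2" by simp
  then show ?thesis using abs_le_square_iff by (metis abs_one)
qed



lemma inner2: "(x::real^2) \<bullet> y = x$1*y$1 + x$2*y$2"
  by (simp add: inner_vec_def sum_2)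

lemma normsq2: "(norm (x::real^2))^2 = x$1^2 + x$2^2"
  unfolding power2_norm_eq_inner inner2 by (simp add: power2_eq_square)

lemma lin2: "linear f \<Longrightarrow> f (x::real^2) = x$1 *\<^sub>R f (axis 1 1) + x$2 *\<^sub>R f (axis 2 1)"
proof -
  assume lf: "linear f"
  have "x = x$1 *\<^sub>R axis 1 1 + x$2 *\<^sub>R axis 2 1"
    by (simp add: vec_eq_iff forall_2 axis_def)
  then have "f x = f (x$1 *\<^sub>R axis 1 1 + x$2 *\<^sub>R axis 2 1)" by simp
  also have "\<dots> = x$1 *\<^sub>R f (axis 1 1) + x$2 *\<^sub>R f (axis 2 1)"
    using lf by (simp add: linear_add linear_scale)
  finally show ?thesis .
qed

lemma det2f: "det (matrix (f::real^2\<Rightarrow>real^2)) = f (axis 1 1)$1 * f (axis 2 1)$2 - f (axis 2 1)$1 * f (axis 1 1)$2"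
  by (simp add: det_2 matrix_def)

lemma contact_bound:
  fixes N :: "real^2 \<Rightarrow> real" and v :: "real^2" and f :: "real^2 \<Rightarrow> real^2"
  assumes n: "is_norm N" and le: "\<And>x. N x \<le> norm x" and nv: "norm v = 1" and Nv: "N v = 1"
    and lin: "linear f" and sub: "(\<lambda>x. c + f x) ` cball 0 1 \<subseteq> {x. N x \<le> 1}"
  shows "(v$1 * f (axis 1 1)$1 + v$2 * f (axis 1 1)$2)^2 + (v$1 * f (axis 2 1)$1 + v$2 * f (axis 2 1)$2)^2 \<le> 1"
proof -
  define p where "p = v$1 * f (axis 1 1)$1 + v$2 * f (axis 1 1)$2"
  define q where "q = v$1 * f (axis 2 1)$1 + v$2 * f (axis 2 1)$2"
  have main: "p^2 + q^2 \<le> 1"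
  proof (cases "p^2 + q^2 = 0")
    case True then show ?thesis by simp
  next
    case False
    define r where "r = sqrt (p^2 + q^2)"
    have pq0: "p^2 + q^2 > 0" using False by (simp add: add_nonneg_nonneg order_neq_le_trans)
    have r0: "r > 0" using pq0 r_def by simp
    have rr: "r * r = p^2 + q^2" using pq0 r_def by simp
    define x :: "real^2" where "x = vector [p/r, q/r]"
    have "(norm x)^2 = (p/r)^2 + (q/r)^2" by (simp add: normsq2 x_def)
    also have "\<dots> = (p^2+q^2)/(r*r)" by (simp add: power_divide power2_eq_square add_divide_distrib)
    also have "\<dots> = 1" using rr pq0 by (simp only: divide_self)
    finally have "(norm x)^2 \<le> 1^2" by simp
    then have nx: "norm x \<le> 1" by (rule power2_le_imp_le) simp
    have "N (f x) \<le> 1" by (rule ellipse_sym[OF n lin sub nx])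
    moreover have "v \<bullet> f x \<le> N (f x)" by (rule contact_support[OF n le nv Nv])
    moreover have "v \<bullet> f x = (p/r) * p + (q/r) * q"
      using r0 by (subst lin2[OF lin]) (simp add: x_def inner2 p_def q_def field_simps)
    moreover have "(p/r) * p + (q/r) * q = r" using rr r0 by (simp add: field_simps power2_eq_square)
    ultimately have "r \<le> 1" by simp
    then have "r * r \<le> 1" using r0 by (simp add: mult_le_one)
    then show ?thesis using rr by simp
  qed
  then show ?thesis by (simp add: p_def q_def)
qed

lemma dir_back:
  fixes N :: "real^2 \<Rightarrow> real" and v0 v1 v2 :: "real^2" and F :: "(real^2) set"
  assumes n: "is_norm N" and le: "\<And>x. N x \<le> norm x"
    and c0: "norm v0 = 1" "N v0 = 1" and c1: "norm v1 = 1" "N v1 = 1" and c2: "norm v2 = 1" "N v2 = 1"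
    and d01: "v0 \<bullet> v1 \<ge> 0" and d12: "v1 \<bullet> v2 \<ge> 0" and d20: "v2 \<bullet> (- v0) \<ge> 0"
    and F: "is_ellipse F" "F \<subseteq> {x. N x \<le> 1}"
  shows "measure lebesgue F \<le> measure lebesgue (cball (0::real^2) 1)"
proof -
  obtain c f where lf: "linear f" and Fe: "F = (\<lambda>x. c + f x) ` cball (0::real^2) 1"
    using F(1) unfolding is_ellipse_def by blast
  have sub: "(\<lambda>x. c + f x) ` cball 0 1 \<subseteq> {x. N x \<le> 1}" using F(2) Fe by simp
  have u: "v$1^2 + v$2^2 = 1" if "norm v = 1" for v :: "real^2" using normsq2[of v] that by simp
  have "\<bar>f (axis 1 1)$1 * f (axis 2 1)$2 - f (axis 2 1)$1 * f (axis 1 1)$2\<bar> \<le> 1"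
    apply (rule key_det[of "v0$1" "v0$2" "v1$1" "v1$2" "v2$1" "v2$2"])
    using u[OF c0(1)] u[OF c1(1)] u[OF c2(1)] d01 d12 d20
      contact_bound[OF n le c0 lf sub] contact_bound[OF n le c1 lf sub] contact_bound[OF n le c2 lf sub]
    by (auto simp: inner2 algebra_simps)
  then have dl: "\<bar>det (matrix f)\<bar> \<le> 1" by (simp add: det2f)
  have "F = (+) c ` (f ` cball 0 1)" using Fe by (auto simp: image_image)
  then have "measure lebesgue F = measure lebesgue (f ` cball 0 1)" by (simp add: measure_translation)
  also have "\<dots> = \<bar>det (matrix f)\<bar> * measure lebesgue (cball (0::real^2) 1)"
    by (rule measure_linear_image[OF lf]) simp
  also have "\<dots> \<le> 1 * measure lebesgue (cball (0::real^2) 1)"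
    using dl by (intro mult_right_mono) auto
  finally show ?thesis by simp
qed



definition phi :: "real^2 \<Rightarrow> real^2" where
  "phi x = (\<chi> i. if i = 1 then x$1^2 - x$2^2 else 2*x$1*x$2)"

lemma phi1[simp]: "phi x $ 1 = x$1^2 - x$2^2" by (simp add: phi_def)
lemma phi2[simp]: "phi x $ 2 = 2*x$1*x$2" by (simp add: phi_def)

lemma phi_inner: "phi x \<bullet> phi y = 2*(x \<bullet> y)^2 - (norm x)^2 * (norm y)^2"
  unfolding inner2 normsq2 by (simp add: power2_eq_square algebra_simps)

lemma phi_scale: "phi (s *\<^sub>R x) = s^2 *\<^sub>R phi x"
  by (simp add: vec_eq_iff forall_2 power2_eq_square algebra_simps)

lemma phi_norm: "norm (phi x) = (norm x)^2"
proof -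
  have h: "(norm (phi x))^2 = ((norm x)^2)^2"
    unfolding normsq2 by (simp add: power2_eq_square algebra_simps)
  show ?thesis by (rule power2_eq_imp_eq[OF h]) simp_all
qed

lemma mid_ineq:
  fixes a b c d :: real
  assumes a: "a > 0" and c: "c > 0" and ab: "a^2+b^2 = 1" and cd: "c^2+d^2 = 1"
    and e0: "a*c + b*d > 0" and ea: "a*c + b*d \<le> a" and ec: "a*c + b*d \<le> c"
  shows "(a+c)^2 > 1 + (a*c + b*d)"
proof -
  have key: "(a+c)^2 - 1 - (a*c+b*d) = (a*c - b*d) * (1 + (a*c+b*d))"
  proof -
    have "a^2 + c^2 - 1 = (a*c - b*d) * (a*c + b*d)"
    proof -
      have "(a*c - b*d) * (a*c + b*d) = a^2*c^2 - b^2*d^2" by (simp add: power2_eq_square algebra_simps)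
      also have "\<dots> = a^2*c^2 - (1 - a^2)*(1-c^2)"
      proof -
        have "b^2 = 1 - a^2" "d^2 = 1 - c^2" using ab cd by linarith+
        then show ?thesis by simp
      qed
      also have "\<dots> = a^2 + c^2 - 1" by (simp add: algebra_simps)
      finally show ?thesis by simp
    qed
    then show ?thesis by (simp add: power2_eq_square algebra_simps)
  qed
  have "a*c > b*d"
  proof (rule ccontr)
    assume "\<not> a*c > b*d"
    then have bd: "b*d \<ge> a*c" by simp
    have "a*c > 0" using a c by simp
    then have bdp: "b*d > 0" using bd by linarith
    have h1: "b*d \<le> a*(1-c)" using ea by (simp add: algebra_simps)
    have h2: "b*d \<le> c*(1-a)" using ec by (simp add: algebra_simps)
    have "(b*d)*(b*d) \<le> (a*(1-c))*(c*(1-a))" by (rule mult_mono[OF h1 h2]) (use bdp h1 in auto)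
    moreover have "(b*d)*(b*d) = (1-a)*(1+a)*((1-c)*(1+c))"
    proof -
      have "(b*d)*(b*d) = b^2 * d^2" by (simp add: power2_eq_square)
      also have "\<dots> = (1-a^2)*(1-c^2)"
      proof -
        have "b^2 = 1 - a^2" "d^2 = 1 - c^2" using ab cd by linarith+
        then show ?thesis by simp
      qed
      finally show ?thesis by (simp add: power2_eq_square algebra_simps)
    qed
    ultimately have ineq: "(1-a)*(1-c)*((1+a)*(1+c)) \<le> (1-a)*(1-c)*(a*c)" by (simp add: algebra_simps)
    have "a*(1-c) > 0" using h1 bdp by linarith
    then have "1 - c > 0" using a by (simp add: zero_less_mult_iff)
    moreover have "c*(1-a) > 0" using h2 bdp by linarith
    then have "1 - a > 0" using c by (simp add: zero_less_mult_iff)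
    ultimately have "(1-a)*(1-c) > 0" by simp
    with ineq have "(1+a)*(1+c) \<le> a*c" by (simp add: mult_le_cancel_left_pos)
    then show False using a c by (simp add: algebra_simps)
  qed
  then have "(a*c - b*d) * (1 + (a*c+b*d)) > 0" using e0 by simp
  then show ?thesis using key by simp
qed

definition cross2 :: "real^2 \<Rightarrow> real^2 \<Rightarrow> real" where
  "cross2 x y = x$1*y$2 - x$2*y$1"

lemma gram_rel: "(x \<bullet> x) * (y \<bullet> w) = (x \<bullet> y) * (x \<bullet> w) + cross2 x y * cross2 x w"
  unfolding inner2 cross2_def by (simp add: algebra_simps)

lemma gram_rel2: "(x \<bullet> x) * (y \<bullet> y) = (x \<bullet> y)^2 + (cross2 x y)^2"
  unfolding inner2 cross2_def by (simp add: power2_eq_square algebra_simps)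

lemma core:
  fixes w1 w2 w3 :: "real^2"
  assumes u1: "norm w1 = 1" and u2: "norm w2 = 1" and u3: "norm w3 = 1"
    and g12: "w1 \<bullet> w2 > 0" and g13: "w1 \<bullet> w3 > 0" and g23: "w2 \<bullet> w3 > 0"
    and m1: "w1 \<bullet> w3 \<le> w1 \<bullet> w2" and m2: "w1 \<bullet> w3 \<le> w2 \<bullet> w3"
  shows "phi w1 \<bullet> phi (w1 + w3) > 0 \<and> phi w2 \<bullet> phi (w1 + w3) > 0 \<and> phi w3 \<bullet> phi (w1 + w3) > 0"
proof -
  have ii: "w \<bullet> w = 1" if "norm w = 1" for w :: "real^2" using that by (simp add: norm_eq_1)
  have nu: "(norm (w1 + w3))^2 = 2 + 2 * (w1 \<bullet> w3)"
    unfolding power2_norm_eq_inner using ii[OF u1] ii[OF u3]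
    by (simp add: inner_add_left inner_add_right inner_commute)
  have A: "phi w1 \<bullet> phi (w1 + w3) = 2 * (1 + w1 \<bullet> w3) * (w1 \<bullet> w3)"
    unfolding phi_inner nu using u1 ii[OF u1]
    by (simp add: inner_add_right power2_eq_square algebra_simps)
  have C: "phi w3 \<bullet> phi (w1 + w3) = 2 * (1 + w1 \<bullet> w3) * (w1 \<bullet> w3)"
    unfolding phi_inner nu using u3 ii[OF u3]
    by (simp add: inner_add_right power2_eq_square algebra_simps inner_commute)
  have B: "phi w2 \<bullet> phi (w1 + w3) = 2 * ((w1 \<bullet> w2 + w2 \<bullet> w3)^2 - 1 - w1 \<bullet> w3)"
    unfolding phi_inner nu using u2
    by (simp add: inner_add_right inner_commute algebra_simps)
  define a where "a = w1 \<bullet> w2"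
  define c where "c = w2 \<bullet> w3"
  define b where "b = cross2 w2 w1"
  define d where "d = cross2 w2 w3"
  have e: "w1 \<bullet> w3 = a*c + b*d"
    using gram_rel[of w2 w1 w3] ii[OF u2] unfolding a_def b_def c_def d_def by (simp add: inner_commute)
  have ab: "a^2 + b^2 = 1"
    using gram_rel2[of w2 w1] ii[OF u2] ii[OF u1] unfolding a_def b_def by (simp add: inner_commute)
  have cd: "c^2 + d^2 = 1"
    using gram_rel2[of w2 w3] ii[OF u2] ii[OF u3] unfolding c_def d_def by simp
  have "(a+c)^2 > 1 + (a*c + b*d)"
    by (rule mid_ineq) (use g12 g23 g13 m1 m2 ab cd e a_def c_def in auto)
  then have "phi w2 \<bullet> phi (w1 + w3) > 0" unfolding B using e a_def c_def by simp
  moreover have "phi w1 \<bullet> phi (w1 + w3) > 0" unfolding A using g13 by (simp add: add_pos_pos)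
  moreover have "phi w3 \<bullet> phi (w1 + w3) > 0" unfolding C using g13 by (simp add: add_pos_pos)
  ultimately show ?thesis by simp
qed

lemma allpos:
  fixes w1 w2 w3 :: "real^2"
  assumes u1: "norm w1 = 1" and u2: "norm w2 = 1" and u3: "norm w3 = 1"
    and g12: "w1 \<bullet> w2 > 0" and g13: "w1 \<bullet> w3 > 0" and g23: "w2 \<bullet> w3 > 0"
  shows "\<exists>z. phi w1 \<bullet> z > 0 \<and> phi w2 \<bullet> z > 0 \<and> phi w3 \<bullet> z > 0"
proof -
  consider "w1 \<bullet> w3 \<le> w1 \<bullet> w2 \<and> w1 \<bullet> w3 \<le> w2 \<bullet> w3"
    | "w1 \<bullet> w2 \<le> w1 \<bullet> w3 \<and> w1 \<bullet> w2 \<le> w2 \<bullet> w3"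
    | "w2 \<bullet> w3 \<le> w1 \<bullet> w2 \<and> w2 \<bullet> w3 \<le> w1 \<bullet> w3" by linarith
  then show ?thesis
  proof cases
    case 1 then show ?thesis using core[OF u1 u2 u3 g12 g13 g23] by blast
  next
    case 2
    have "w3 \<bullet> w2 > 0" using g23 by (simp add: inner_commute)
    then have "phi w1 \<bullet> phi (w1 + w2) > 0 \<and> phi w3 \<bullet> phi (w1 + w2) > 0 \<and> phi w2 \<bullet> phi (w1 + w2) > 0"
      using core[OF u1 u3 u2 g13 g12] 2 by (simp add: inner_commute)
    then show ?thesis by blast
  next
    case 3
    have "w2 \<bullet> w1 > 0" using g12 by (simp add: inner_commute)
    then have "phi w2 \<bullet> phi (w2 + w3) > 0 \<and> phi w1 \<bullet> phi (w2 + w3) > 0 \<and> phi w3 \<bullet> phi (w2 + w3) > 0"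
      using core[OF u2 u1 u3 _ g23 g13] 3 by (simp add: inner_commute)
    then show ?thesis by blast
  qed
qed

definition JC :: "(real^2 \<Rightarrow> real) \<Rightarrow> bool" where
  "JC N \<longleftrightarrow> (\<exists>v0 v1 v2 :: real^2.
       norm v0 = 1 \<and> N v0 = 1 \<and> norm v1 = 1 \<and> N v1 = 1 \<and>
       norm v2 = 1 \<and> N v2 = 1 \<and>
       v0 \<bullet> v1 \<ge> 0 \<and> v1 \<bullet> v2 \<ge> 0 \<and> v2 \<bullet> (- v0) \<ge> 0)"

lemma contact_sgn:
  assumes n: "is_norm N" and "norm w = 1" "N w = 1" and "g \<noteq> 0"
  shows "norm (sgn g *\<^sub>R w) = 1 \<and> N (sgn g *\<^sub>R w) = 1"
  using assms isn_scale[OF n, of "sgn g" w] by (auto simp: abs_sgn)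

lemma sign_case:
  fixes w1 w2 w3 :: "real^2"
  assumes n: "is_norm N"
    and c1: "norm w1 = 1" "N w1 = 1" and c2: "norm w2 = 1" "N w2 = 1" and c3: "norm w3 = 1" "N w3 = 1"
    and prod: "(w1 \<bullet> w2) * (w2 \<bullet> w3) * (w1 \<bullet> w3) \<le> 0"
  shows "JC N"
proof -
  have ii: "w \<bullet> w = 1" if "norm w = 1" for w :: "real^2" using that by (simp add: norm_eq_1)
  show ?thesis
  proof (cases "w1 \<bullet> w3 = 0 \<or> w1 \<bullet> w2 = 0 \<or> w2 \<bullet> w3 = 0")
    case True
    then show ?thesis
    proof (elim disjE)
      assume h: "w1 \<bullet> w3 = 0"
      show ?thesis unfolding JC_def
        by (rule exI[of _ w1], rule exI[of _ w3], rule exI[of _ w3]) (use c1 c3 h ii[OF c3(1)] in \<open>auto simp: inner_commute\<close>)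
    next
      assume h: "w1 \<bullet> w2 = 0"
      show ?thesis unfolding JC_def
        by (rule exI[of _ w1], rule exI[of _ w2], rule exI[of _ w2]) (use c1 c2 h ii[OF c2(1)] in \<open>auto simp: inner_commute\<close>)
    next
      assume h: "w2 \<bullet> w3 = 0"
      show ?thesis unfolding JC_def
        by (rule exI[of _ w2], rule exI[of _ w3], rule exI[of _ w3]) (use c2 c3 h ii[OF c3(1)] in \<open>auto simp: inner_commute\<close>)
    qed
  next
    case False
    define s1 where "s1 = sgn (w1 \<bullet> w2)"
    define s2 where "s2 = s1 * sgn (w2 \<bullet> w3)"
    have v1: "norm (s1 *\<^sub>R w2) = 1 \<and> N (s1 *\<^sub>R w2) = 1"
      unfolding s1_def using contact_sgn[OF n c2] False by auto
    have "norm (sgn (w1 \<bullet> w2) *\<^sub>R (sgn (w2 \<bullet> w3) *\<^sub>R w3)) = 1 \<and> N (sgn (w1 \<bullet> w2) *\<^sub>R (sgn (w2 \<bullet> w3) *\<^sub>R w3)) = 1"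
      using contact_sgn[OF n] contact_sgn[OF n c3] False by blast
    then have v2: "norm (s2 *\<^sub>R w3) = 1 \<and> N (s2 *\<^sub>R w3) = 1" unfolding s2_def s1_def by (simp add: mult.commute)
    have s1sq: "s1 * s1 = 1" using False s1_def by (simp add: sgn_if)
    have d1: "w1 \<bullet> (s1 *\<^sub>R w2) \<ge> 0" unfolding s1_def
      by (cases "w1 \<bullet> w2 > 0") (auto simp: sgn_if)
    have d2: "(s1 *\<^sub>R w2) \<bullet> (s2 *\<^sub>R w3) \<ge> 0"
    proof -
      have "(s1 *\<^sub>R w2) \<bullet> (s2 *\<^sub>R w3) = (s1 * s1) * (sgn (w2 \<bullet> w3) * (w2 \<bullet> w3))"
        unfolding s2_def by (simp add: algebra_simps)
      also have "\<dots> = \<bar>w2 \<bullet> w3\<bar>" using s1sq by (simp add: sgn_mult_abs abs_sgn)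
      finally show ?thesis by simp
    qed
    have d3: "(s2 *\<^sub>R w3) \<bullet> (- w1) \<ge> 0"
    proof -
      have "(s2 *\<^sub>R w3) \<bullet> (- w1) = - sgn ((w1 \<bullet> w2) * (w2 \<bullet> w3)) * (w1 \<bullet> w3)"
        unfolding s2_def s1_def by (simp add: sgn_mult inner_commute)
      moreover have "sgn ((w1 \<bullet> w2) * (w2 \<bullet> w3)) * (w1 \<bullet> w3) \<le> 0"
      proof (cases "(w1 \<bullet> w2) * (w2 \<bullet> w3) > 0")
        case True
        have "((w1 \<bullet> w2) * (w2 \<bullet> w3)) * (w1 \<bullet> w3) \<le> ((w1 \<bullet> w2) * (w2 \<bullet> w3)) * 0" using prod by simp
        then have "w1 \<bullet> w3 \<le> 0" using True by (rule mult_left_le_imp_le)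
        then show ?thesis using True by simp
      next
        case False2: False
        then have "(w1 \<bullet> w2) * (w2 \<bullet> w3) < 0" using False by (simp add: linorder_not_less order_le_less)
        then have np: "- ((w1 \<bullet> w2) * (w2 \<bullet> w3)) > 0" by simp
        have "(- ((w1 \<bullet> w2) * (w2 \<bullet> w3))) * 0 \<le> (- ((w1 \<bullet> w2) * (w2 \<bullet> w3))) * (w1 \<bullet> w3)"
          using prod by (simp only: mult_zero_right minus_mult_left[symmetric] neg_0_le_iff_le)
        then have "w1 \<bullet> w3 \<ge> 0" using np by (rule mult_left_le_imp_le)
        then show ?thesis using \<open>(w1 \<bullet> w2) * (w2 \<bullet> w3) < 0\<close> by simp
      qed
      ultimately show ?thesis by simp
    qed
    show ?thesis unfolding JC_def
      by (rule exI[of _ w1], rule exI[of _ "s1 *\<^sub>R w2"], rule exI[of _ "s2 *\<^sub>R w3"]) (use c1 v1 v2 d1 d2 d3 in auto)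
  qed
qed



lemma three:
  assumes "finite S" "S \<noteq> {}" "card S \<le> 3"
  shows "\<exists>a b c. S = {a,b,c}"
proof -
  have "card S > 0" using assms by (simp add: card_gt_0_iff)
  then have "card S = 1 \<or> card S = 2 \<or> card S = 3" using assms(3) by linarith
  then show ?thesis
  proof (elim disjE)
    assume "card S = 1"
    then obtain x where "S = {x}" using card_1_singleton_iff by (metis One_nat_def)
    then show ?thesis by auto
  next
    assume "card S = 2"
    then obtain x y where "S = {x,y}" using card_2_iff by metis
    then show ?thesis by auto
  next
    assume "card S = 3"
    then obtain x y z where "S = {x,y,z}" using card_3_iff by metis
    then show ?thesis by auto
  qed
qed

lemma pos_comb:
  fixes u v w A B C :: real
  assumes "0 \<le> u" "0 \<le> v" "0 \<le> w" "u + v + w = 1" "A > 0" "B > 0" "C > 0"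
  shows "u * A + v * B + w * C > 0"
proof -
  define m where "m = min A (min B C)"
  have m: "m > 0" "m \<le> A" "m \<le> B" "m \<le> C" using assms m_def by auto
  have "u*m \<le> u*A" using assms m by (intro mult_left_mono) auto
  moreover have "v * m \<le> v * B" using assms m by (intro mult_left_mono) auto
  moreover have "w*m \<le> w*C" using assms m by (intro mult_left_mono) auto
  moreover have "u*m + v * m + w*m = (u + v + w) * m" by (simp add: algebra_simps)
  then have "u*m + v * m + w*m = m" using assms(4) by simp
  ultimately show ?thesis using m by linarith
qed

lemma conv3_JC:
  fixes w1 w2 w3 :: "real^2"
  assumes n: "is_norm N"
    and c1: "norm w1 = 1" "N w1 = 1" and c2: "norm w2 = 1" "N w2 = 1" and c3: "norm w3 = 1" "N w3 = 1"
    and hull: "0 \<in> convex hull {phi w1, phi w2, phi w3}"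
  shows "JC N"
proof (cases "(w1 \<bullet> w2) * (w2 \<bullet> w3) * (w1 \<bullet> w3) \<le> 0")
  case True
  then show ?thesis using sign_case[OF n c1 c2 c3] by blast
next
  case False
  then have P: "(w1 \<bullet> w2) * (w2 \<bullet> w3) * (w1 \<bullet> w3) > 0" by simp
  then have nz: "w1 \<bullet> w2 \<noteq> 0" "w2 \<bullet> w3 \<noteq> 0" "w1 \<bullet> w3 \<noteq> 0" by auto
  define s2 where "s2 = sgn (w1 \<bullet> w2)"
  define s3 where "s3 = sgn (w1 \<bullet> w3)"
  have ss2: "s2 * s2 = 1" using nz s2_def by (simp add: sgn_if)
  have ss3: "s3 * s3 = 1" using nz s3_def by (simp add: sgn_if)
  have as2: "\<bar>s2\<bar> = 1" using nz s2_def by (simp add: sgn_if)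
  have as3: "\<bar>s3\<bar> = 1" using nz s3_def by (simp add: sgn_if)
  have u2: "norm (s2 *\<^sub>R w2) = 1" using c2 as2 by simp
  have u3: "norm (s3 *\<^sub>R w3) = 1" using c3 as3 by simp
  have g12: "w1 \<bullet> (s2 *\<^sub>R w2) > 0" unfolding s2_def using nz
    by (cases "w1 \<bullet> w2 > 0") (auto simp: sgn_if)
  have g13: "w1 \<bullet> (s3 *\<^sub>R w3) > 0" unfolding s3_def using nz
    by (cases "w1 \<bullet> w3 > 0") (auto simp: sgn_if)
  have "(s2 *\<^sub>R w2) \<bullet> (s3 *\<^sub>R w3) * ((w1 \<bullet> (s2 *\<^sub>R w2)) * (w1 \<bullet> (s3 *\<^sub>R w3)))
      = (s2 * s2) * (s3 * s3) * ((w1 \<bullet> w2) * (w2 \<bullet> w3) * (w1 \<bullet> w3))"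
    by (simp add: algebra_simps)
  also have "\<dots> > 0" using ss2 ss3 P by simp
  finally have "(s2 *\<^sub>R w2) \<bullet> (s3 *\<^sub>R w3) * ((w1 \<bullet> (s2 *\<^sub>R w2)) * (w1 \<bullet> (s3 *\<^sub>R w3))) > 0" .
  moreover have "(w1 \<bullet> (s2 *\<^sub>R w2)) * (w1 \<bullet> (s3 *\<^sub>R w3)) > 0" using g12 g13 by simp
  ultimately have g23: "(s2 *\<^sub>R w2) \<bullet> (s3 *\<^sub>R w3) > 0" by (rule zero_less_mult_pos2)
  obtain z where z: "phi w1 \<bullet> z > 0" "phi (s2 *\<^sub>R w2) \<bullet> z > 0" "phi (s3 *\<^sub>R w3) \<bullet> z > 0"
    using allpos[OF c1(1) u2 u3 g12 g13 g23] by blast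
  have p2: "phi (s2 *\<^sub>R w2) = phi w2" using ss2 by (simp add: phi_scale power2_eq_square)
  have p3: "phi (s3 *\<^sub>R w3) = phi w3" using ss3 by (simp add: phi_scale power2_eq_square)
  obtain u v w where uvw: "0 \<le> u" "0 \<le> v" "0 \<le> w" "u + v + w = 1"
    and eq: "0 = u *\<^sub>R phi w1 + v *\<^sub>R phi w2 + w *\<^sub>R phi w3"
    using hull unfolding convex_hull_3 by blast
  have "0 = (u *\<^sub>R phi w1 + v *\<^sub>R phi w2 + w *\<^sub>R phi w3) \<bullet> z" using eq[symmetric] by simp
  also have "\<dots> = u * (phi w1 \<bullet> z) + v * (phi w2 \<bullet> z) + w * (phi w3 \<bullet> z)"
    by (simp add: inner_add_left)
  also have "\<dots> > 0" using pos_comb[OF uvw z(1)] z(2,3) p2 p3 by simp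
  finally show ?thesis by simp
qed

lemma cara_JC:
  fixes N :: "real^2 \<Rightarrow> real"
  assumes n: "is_norm N"
    and hull: "0 \<in> convex hull (phi ` {v. norm v = 1 \<and> N v = 1})"
  shows "JC N"
proof -
  obtain S where S: "finite S" "S \<subseteq> phi ` {v. norm v = 1 \<and> N v = 1}" "card S \<le> DIM(real^2) + 1"
    "0 \<in> convex hull S"
    using hull unfolding caratheodory[of "phi ` {v. norm v = 1 \<and> N v = 1}"] by blast
  have "S \<noteq> {}" using S(4) by auto
  moreover have "card S \<le> 3" using S(3) by simp
  ultimately obtain a b c where abc: "S = {a,b,c}" using three S(1) by blast
  obtain w1 where w1: "norm w1 = 1" "N w1 = 1" "a = phi w1" using S(2) abc by auto
  obtain w2 where w2: "norm w2 = 1" "N w2 = 1" "b = phi w2" using S(2) abc by auto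
  obtain w3 where w3: "norm w3 = 1" "N w3 = 1" "c = phi w3" using S(2) abc by auto
  show ?thesis by (rule conv3_JC[OF n w1(1,2) w2(1,2) w3(1,2)]) (use S(4) abc w1 w2 w3 in simp)
qed



lemma LP:
  fixes s t k M A r :: real
  assumes s: "0 \<le> s" and t: "0 \<le> t" and st: "s + t \<le> 1" and k0: "0 < k" and k1: "k < 1"
    and r: "r = (1-k)/(1+k)" and M1: "1 < M" and A: "A = M / (M * (1+r) - r)"
    and h: "A * s - M * t \<ge> k * (A * s + M * t)"
  shows "A * s + M * t \<le> 1"
proof -
  have r0a: "0 \<le> r" unfolding r using k0 k1 by (intro divide_nonneg_nonneg) auto
  have r0b: "r < 1" unfolding r using k0 by (simp add: divide_less_eq_1)
  note r0 = r0a r0b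
  have D: "M * (1+r) - r > 0" using M1 r0 
  proof -
    have "r * (M - 1) \<ge> 0" using M1 r0 by simp
    moreover have "M * (1+r) - r = M + r * (M-1)" by (simp add: algebra_simps)
    ultimately show ?thesis using M1 by linarith
  qed
  have AD: "A * (M * (1+r) - r) = M" using A D by simp
  have key: "A * M * (1+r) = M + r * A" using AD by (simp add: algebra_simps)
  have A0: "A > 0" using A D M1 by simp
  have AM: "A \<le> M"
  proof -
    have "r * (M - 1) \<ge> 0" using M1 r0 by simp
    then have "M \<le> M * (1+r) - r" by (simp add: algebra_simps)
    then have "A \<le> 1" using A D M1 by (simp add: divide_le_eq_1)
    then show ?thesis using M1 by simp
  qed
  have "M * t * (1+k) \<le> A * s * (1-k)" using h by (simp add: algebra_simps)
  then have "M * t \<le> A * s * (1-k)/(1+k)" using k0 by (simp add: field_simps)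
  then have Mt: "M * t - r * A * s \<le> 0" using r by (simp add: field_simps)
  have id: "(M + r * A) * (A * s + M * t) - ((M + r * A) * (s+t) + (M-A) * (M * t - r * A * s)) = (s+t) * (A * M * (1+r) - M - r * A)"
    by (simp add: algebra_simps)
  then have eq: "(M + r * A) * (A * s + M * t) = (M + r * A) * (s+t) + (M-A) * (M * t - r * A * s)" using key by simp
  have "(M-A) * (M * t - r * A * s) \<le> 0" using AM Mt by (simp add: mult_nonneg_nonpos)
  moreover have "(M + r * A) * (s+t) \<le> (M + r * A) * 1" using st M1 A0 r0 by (intro mult_left_mono) auto
  ultimately have "(M + r * A) * (A * s + M * t) \<le> (M + r * A) * 1" using eq by linarith
  moreover have "M + r * A > 0" using M1 A0 r0 by (simp add: add_pos_nonneg)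
  ultimately show ?thesis by (rule mult_left_le_imp_le)
qed

lemma AM_gt1:
  fixes M r :: real
  assumes M1: "1 < M" and r0: "0 \<le> r" "r < 1"
  shows "M / (M * (1+r) - r) * M > 1"
proof -
  have D: "M * (1+r) - r > 0" using M1 r0 
  proof -
    have "r * (M - 1) \<ge> 0" using M1 r0 by simp
    moreover have "M * (1+r) - r = M + r * (M-1)" by (simp add: algebra_simps)
    ultimately show ?thesis using M1 by linarith
  qed
  have "(M - 1) * (M - r) > 0" using M1 r0 by simp
  then have "M * M > M * (1+r) - r" by (simp add: algebra_simps)
  then show ?thesis using D by (simp add: field_simps)
qed



lemma phi_cont: "continuous_on UNIV phi"
  unfolding phi_def
  apply (rule continuous_on_vec_lambda)
  subgoal for i by (cases "i = 1") (auto intro!: continuous_intros)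
  done

lemma dir_fwd:
  fixes N :: "real^2 \<Rightarrow> real"
  assumes n: "is_norm N" and le: "\<And>x. N x \<le> norm x"
    and john: "is_john_ellipse {x. N x \<le> 1} (cball (0::real^2) 1)"
  shows "JC N"
proof (rule ccontr)
  assume nJC: "\<not> JC N"
  define C where "C = {v::real^2. norm v = 1 \<and> N v = 1}"
  have Ncont: "continuous_on UNIV N" by (rule isn_cont[OF n le])
  have hull0: "0 \<notin> convex hull (phi ` C)" using cara_JC[OF n] nJC C_def by blast
  have "closed C"
  proof -
    have "closed {v::real^2. norm v = 1}" by (intro closed_Collect_eq continuous_intros)
    moreover have "closed {v::real^2. N v = 1}" using Ncont by (intro closed_Collect_eq continuous_intros)
    ultimately have "closed ({v::real^2. norm v = 1} \<inter> {v. N v = 1})" by blast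
    then show ?thesis unfolding C_def by (simp add: Collect_conj_eq)
  qed
  moreover have "bounded C" unfolding C_def bounded_iff by auto
  ultimately have "compact C" by (simp add: compact_eq_bounded_closed)
  then have "compact (phi ` C)" using phi_cont by (intro compact_continuous_image) (auto intro: continuous_on_subset)
  then have "compact (convex hull (phi ` C))" by (rule compact_convex_hull)
  then obtain a b where ab: "a \<noteq> 0" "0 < b" "\<forall>x\<in>convex hull (phi ` C). inner a x > b"
    using separating_hyperplane_closed_0[OF convex_convex_hull compact_imp_closed hull0] by blast
  define z where "z = (1 / norm a) *\<^sub>R a"
  define \<kappa> where "\<kappa> = b / norm a"
  have na: "norm a > 0" using ab by simp
  have kap: "\<kappa> > 0" using ab na \<kappa>_def by simp
  have nz: "norm z = 1" using na z_def by simp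
  have zc: "phi v \<bullet> z > \<kappa>" if "v \<in> C" for v
  proof -
    have "phi v \<in> convex hull (phi ` C)" using that by (intro hull_inc) auto
    then have "inner a (phi v) > b" using ab by blast
    then show ?thesis unfolding z_def \<kappa>_def using na by (simp add: inner_commute divide_strict_right_mono)
  qed
  define k where "k = min (\<kappa>/2) (1/2)"
  have k0: "0 < k" and k1: "k < 1" and kk: "k < \<kappa>" using kap k_def by auto
  define K where "K = {w::real^2. norm w = 1 \<and> phi w \<bullet> z \<le> k}"
  have "compact K"
  proof -
    have "closed {w::real^2. norm w = 1}" by (intro closed_Collect_eq continuous_intros)
    moreover have "closed {w::real^2. phi w \<bullet> z \<le> k}"
      using phi_cont by (intro closed_Collect_le continuous_intros) auto
    ultimately have "closed K" unfolding K_def by (simp add: Collect_conj_eq closed_Int)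
    moreover have "bounded K" unfolding K_def bounded_iff by auto
    ultimately show ?thesis by (simp add: compact_eq_bounded_closed)
  qed
  have NK: "N w < 1" if "w \<in> K" for w
  proof -
    have "N w \<le> 1" using le[of w] that K_def by simp
    moreover have "N w \<noteq> 1"
    proof
      assume "N w = 1"
      then have "w \<in> C" using that K_def C_def by simp
      then have "phi w \<bullet> z > \<kappa>" by (rule zc)
      then show False using that K_def kk by simp
    qed
    ultimately show ?thesis by simp
  qed
  obtain m0 where m0: "1/2 \<le> m0" "m0 < 1" "\<forall>w\<in>K. N w \<le> m0"
  proof (cases "K = {}")
    case True then show ?thesis using that[of "1/2"] by simp
  next
    case False
    obtain w0 where w0: "w0 \<in> K" "\<forall>y\<in>K. N y \<le> N w0"
      using continuous_attains_sup[OF \<open>compact K\<close> False continuous_on_subset[OF Ncont]] by blast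
    show ?thesis by (rule that[of "max (N w0) (1/2)"]) (use w0 NK in auto)
  qed
  have hom: "N y \<le> m0 * norm y" if "phi y \<bullet> z \<le> k * (norm y)^2" for y
  proof (cases "y = 0")
    case True then show ?thesis using isn_scale[OF n, of 0 0] by simp
  next
    case False
    then have ny: "norm y > 0" by simp
    define w where "w = (1 / norm y) *\<^sub>R y"
    have nw: "norm w = 1" using ny w_def by simp
    have "phi w \<bullet> z = (phi y \<bullet> z) / (norm y)^2"
      unfolding w_def phi_scale by (simp add: power_divide)
    also have "\<dots> \<le> k" using that ny by (simp add: divide_le_eq)
    finally have "w \<in> K" using nw K_def by simp
    then have "N w \<le> m0" using m0 by blast
    moreover have "y = norm y *\<^sub>R w" using ny w_def by simp
    then have "N y = norm y * N w" using isn_scale[OF n, of "norm y" w] by simp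
    ultimately show ?thesis using ny by (simp add: mult.commute mult_left_mono)
  qed

  define r where "r = (1-k)/(1+k)"
  have r0a: "0 \<le> r" unfolding r_def using k0 k1 by (intro divide_nonneg_nonneg) auto
  have r0b: "r < 1" unfolding r_def using k0 by (simp add: divide_less_eq_1)
  define M where "M = (1 + 1/m0^2)/2"
  have m0p: "m0 > 0" using m0 by simp
  have "m0^2 < 1" using power_strict_mono[of m0 1 2] m0 m0p by simp
  then have "1/m0^2 > 1" using m0p by simp
  then have M1: "1 < M" using M_def by simp
  have Mm: "m0^2 * M \<le> 1"
  proof -
    have "m0^2 * M = (m0^2 + 1)/2" using m0p unfolding M_def by (simp add: field_simps)
    also have "\<dots> \<le> 1" using \<open>m0^2 < 1\<close> by simp
    finally show ?thesis .
  qed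
  define A where "A = M / (M * (1+r) - r)"
  have D: "M * (1+r) - r > 0"
  proof -
    have "r * (M - 1) \<ge> 0" using M1 r0a by simp
    moreover have "M * (1+r) - r = M + r * (M-1)" by (simp add: algebra_simps)
    ultimately show ?thesis using M1 by linarith
  qed
  have A0: "A > 0" using A_def D M1 by simp
  have AleM: "A \<le> M"
  proof -
    have "r * (M - 1) \<ge> 0" using M1 r0a by simp
    then have "M \<le> M * (1+r) - r" by (simp add: algebra_simps)
    then have "A \<le> 1" using A_def D M1 by (simp add: divide_le_eq_1)
    then show ?thesis using M1 by simp
  qed
  have AM1: "A * M > 1" unfolding A_def using AM_gt1[OF M1 r0a r0b] .
  define l where "l = sqrt A"
  define u where "u = sqrt M"
  have ll: "l * l = A" using A0 l_def by simp
  have uu: "u * u = M" using M1 u_def by simp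
  define p where "p = (l + u)/2"
  define q where "q = (l - u)/2"
  have pq1: "p^2 + q^2 = (A + M)/2" unfolding p_def q_def using ll uu by (simp add: power2_eq_square field_simps)
  have pq2: "2 * p * q = (A - M)/2" unfolding p_def q_def using ll uu by (simp add: power2_eq_square field_simps)
  have pq3: "p^2 - q^2 = l * u" unfolding p_def q_def by (simp add: power2_eq_square field_simps)
  define z1 where "z1 = z$1"
  define z2 where "z2 = z$2"
  have zz: "z1^2 + z2^2 = 1" using normsq2[of z] nz z1_def z2_def by simp
  define f :: "real^2 \<Rightarrow> real^2" where
    "f x = (\<chi> i. if i = 1 then (p + q * z1) * x$1 + q * z2 * x$2 else q * z2 * x$1 + (p - q * z1) * x$2)" for x
  have f1: "f x $ 1 = (p + q * z1) * x$1 + q * z2 * x$2" for x by (simp add: f_def)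
  have f2: "f x $ 2 = q * z2 * x$1 + (p - q * z1) * x$2" for x by (simp add: f_def)
  have lf: "linear f"
    by (rule linearI) (simp_all add: vec_eq_iff forall_2 f1 f2 algebra_simps)
  have hx: "phi x \<bullet> z = z1 * (x$1^2 - x$2^2) + z2 * (2 * x$1 * x$2)" for x
    unfolding inner2 z1_def z2_def by (simp add: algebra_simps)
  have E1: "(norm (f x))^2 = A * (((norm x)^2 + phi x \<bullet> z)/2) + M * (((norm x)^2 - phi x \<bullet> z)/2)" for x
  proof -
    have "(norm (f x))^2 = (p^2 + q^2 * (z1^2 + z2^2)) * (x$1^2 + x$2^2)
        + 2 * p * q * (z1 * (x$1^2 - x$2^2) + z2 * (2 * x$1 * x$2))"
      unfolding normsq2 f1 f2 by (simp add: power2_eq_square algebra_simps)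
    also have "\<dots> = (A + M)/2 * (norm x)^2 + (A - M)/2 * (phi x \<bullet> z)"
      unfolding zz hx normsq2 pq2 using pq1 by simp
    finally show ?thesis by (simp add: field_simps)
  qed
  have E2: "phi (f x) \<bullet> z = A * (((norm x)^2 + phi x \<bullet> z)/2) - M * (((norm x)^2 - phi x \<bullet> z)/2)" for x
  proof -
    have "phi (f x) \<bullet> z = (p^2 + q^2 * (z1^2 + z2^2)) * (z1 * (x$1^2 - x$2^2) + z2 * (2 * x$1 * x$2))
        + 2 * p * q * (z1^2 + z2^2) * (x$1^2 + x$2^2)"
      unfolding hx f1 f2 by (simp add: power2_eq_square algebra_simps)
    also have "\<dots> = (A + M)/2 * (phi x \<bullet> z) + (A - M)/2 * (norm x)^2"
      unfolding zz hx normsq2 pq2 using pq1 by simp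
    finally show ?thesis by (simp add: field_simps)
  qed
  have habs: "\<bar>phi x \<bullet> z\<bar> \<le> (norm x)^2" for x
  proof -
    have "\<bar>phi x \<bullet> z\<bar> \<le> norm (phi x) * norm z" by (rule Cauchy_Schwarz_ineq2)
    then show ?thesis using nz phi_norm by simp
  qed
  have sub: "(\<lambda>x. 0 + f x) ` cball 0 1 \<subseteq> {x. N x \<le> 1}"
  proof clarify
    fix x :: "real^2" assume "x \<in> cball 0 1"
    then have nx: "norm x \<le> 1" by simp
    define s where "s = ((norm x)^2 + phi x \<bullet> z)/2"
    define t where "t = ((norm x)^2 - phi x \<bullet> z)/2"
    have s0: "0 \<le> s" using habs[of x] s_def by (simp add: abs_le_iff)
    have t0: "0 \<le> t" using habs[of x] t_def by (simp add: abs_le_iff)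
    have "(norm x)^2 \<le> 1" using nx by (simp add: power_le_one)
    then have st: "s + t \<le> 1" using s_def t_def by simp
    have ny: "(norm (f x))^2 = A * s + M * t" unfolding s_def t_def by (rule E1)
    have py: "phi (f x) \<bullet> z = A * s - M * t" unfolding s_def t_def by (rule E2)
    show "N (0 + f x) \<le> 1"
    proof (cases "phi (f x) \<bullet> z \<le> k * (norm (f x))^2")
      case True
      have N1: "N (f x) \<le> m0 * norm (f x)" by (rule hom[OF True])
      have "(norm (f x))^2 \<le> M * s + M * t" unfolding ny using AleM s0 by (simp add: mult_right_mono)
      also have "\<dots> \<le> M * 1" using st M1 by (simp add: distrib_left[symmetric])
      finally have n2: "(norm (f x))^2 \<le> M" by simp
      have "(N (f x))^2 \<le> (m0 * norm (f x))^2" using N1 isn_nonneg[OF n] by (intro power_mono) auto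
      also have "\<dots> = m0^2 * (norm (f x))^2" by (simp add: power_mult_distrib)
      also have "\<dots> \<le> m0^2 * M" using n2 by (intro mult_left_mono) auto
      also have "\<dots> \<le> 1" by (rule Mm)
      finally have "(N (f x))^2 \<le> 1^2" by simp
      then show ?thesis by (simp add: power2_le_imp_le)
    next
      case False
      then have "A * s - M * t \<ge> k * (A * s + M * t)" using ny py by simp
      then have "A * s + M * t \<le> 1" by (intro LP[OF s0 t0 st k0 k1 r_def M1 A_def])
      then have "(norm (f x))^2 \<le> 1^2" using ny by simp
      then have "norm (f x) \<le> 1" by (rule power2_le_imp_le) simp
      then show ?thesis using le[of "f x"] by simp
    qed
  qed
  have "det (matrix f) = p^2 - q^2 * (z1^2 + z2^2)"
    unfolding det2f f1 f2 by (simp add: axis_def power2_eq_square algebra_simps)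
  then have det: "det (matrix f) = l * u" using zz pq3 by simp
  have lu: "l * u > 1"
  proof -
    have "l * u = sqrt (A * M)" unfolding l_def u_def by (simp add: real_sqrt_mult)
    moreover have "sqrt (A * M) > 1" using AM1 by simp
    ultimately show ?thesis by simp
  qed
  have "det (matrix f) \<noteq> 0" unfolding det using lu by linarith
  then have injf: "inj f" using det_nz_iff_inj[OF lf] by blast
  have ell: "is_ellipse ((\<lambda>x. 0 + f x) ` cball 0 1)"
    unfolding is_ellipse_def using lf injf by blast
  have "measure lebesgue ((\<lambda>x. 0 + f x) ` cball 0 1) \<le> measure lebesgue (cball (0::real^2) 1)"
    using john ell sub unfolding is_john_ellipse_def by blast
  moreover have "measure lebesgue ((\<lambda>x. 0 + f x) ` cball 0 1) = l * u * measure lebesgue (cball (0::real^2) 1)"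
    using measure_linear_image[OF lf, of "cball 0 1"] det lu by simp
  moreover have "measure lebesgue (cball (0::real^2) 1) > 0"
    using content_cball_pos[of 1 "0::real^2"] by simp
  ultimately show False using lu by simp
qed



theorem main2:
  fixes N :: "real^2 \<Rightarrow> real"
  assumes n: "is_norm N" and le: "\<And>x. N x \<le> norm x"
  shows "is_john_ellipse {x. N x \<le> 1} (cball 0 1) \<longleftrightarrow> JC N"
proof
  assume "is_john_ellipse {x. N x \<le> 1} (cball 0 1)"
  then show "JC N" by (rule dir_fwd[OF n le])
next
  assume "JC N"
  then obtain v0 v1 v2 :: "real^2" where v: "norm v0 = 1" "N v0 = 1" "norm v1 = 1" "N v1 = 1"
       "norm v2 = 1" "N v2 = 1" "v0 \<bullet> v1 \<ge> 0" "v1 \<bullet> v2 \<ge> 0" "v2 \<bullet> (- v0) \<ge> 0"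
    unfolding JC_def by blast
  have "is_ellipse (cball (0::real^2) 1)"
    unfolding is_ellipse_def by (rule exI[of _ 0], rule exI[of _ id]) (auto simp: linear_id)
  moreover have "cball (0::real^2) 1 \<subseteq> {x. N x \<le> 1}"
  proof clarify
    fix x :: "real^2" assume "x \<in> cball 0 1"
    then show "N x \<le> 1" using le[of x] by simp
  qed
  moreover have "\<forall>F. is_ellipse F \<and> F \<subseteq> {x. N x \<le> 1} \<longrightarrow> measure lebesgue F \<le> measure lebesgue (cball (0::real^2) 1)"
    using dir_back[OF n le v] by blast
  ultimately show "is_john_ellipse {x. N x \<le> 1} (cball 0 1)" unfolding is_john_ellipse_def by blast
qed

definition toC :: "'a::euclidean_space \<Rightarrow> 'a \<Rightarrow> 'a \<Rightarrow> real^2" where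
  "toC b1 b2 x = (\<chi> i. if i = 1 then x \<bullet> b1 else x \<bullet> b2)"

definition frC :: "'a::euclidean_space \<Rightarrow> 'a \<Rightarrow> real^2 \<Rightarrow> 'a" where
  "frC b1 b2 y = y$1 *\<^sub>R b1 + y$2 *\<^sub>R b2"

lemma toC1[simp]: "toC b1 b2 x $ 1 = x \<bullet> b1" by (simp add: toC_def)
lemma toC2[simp]: "toC b1 b2 x $ 2 = x \<bullet> b2" by (simp add: toC_def)

lemma basis2:
  assumes "DIM('a) = 2"
  obtains b1 b2 :: "'a::euclidean_space" where "Basis = {b1, b2}" "b1 \<noteq> b2"
  using assms card_2_iff[of "Basis :: 'a set"] by auto

context
  fixes b1 b2 :: "'a::euclidean_space"
  assumes B: "Basis = {b1, b2}" and B12: "b1 \<noteq> b2"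
begin

lemma bin: "b1 \<in> Basis" "b2 \<in> Basis" using B by auto

lemma prodB: "(\<Prod>b\<in>Basis. g b) = g b1 * g b2" unfolding B using B12 by simp

lemma allB: "(\<forall>b\<in>Basis. P b) \<longleftrightarrow> P b1 \<and> P b2" unfolding B by simp

lemma bb: "b1 \<bullet> b1 = 1" "b2 \<bullet> b2 = 1" "b1 \<bullet> b2 = 0" "b2 \<bullet> b1 = 0"
  using bin B12 by (simp_all add: inner_Basis)

lemma fr_to: "frC b1 b2 (toC b1 b2 x) = x"
proof -
  have "x = (\<Sum>b\<in>Basis. (x \<bullet> b) *\<^sub>R b)" by (simp add: euclidean_representation)
  also have "\<dots> = (x \<bullet> b1) *\<^sub>R b1 + (x \<bullet> b2) *\<^sub>R b2" unfolding B using B12 by simp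
  finally show ?thesis by (simp add: frC_def)
qed

lemma to_fr: "toC b1 b2 (frC b1 b2 y) = y"
  by (simp add: vec_eq_iff forall_2 frC_def inner_add_left bb)

lemma to_inner: "toC b1 b2 x \<bullet> toC b1 b2 y = x \<bullet> y"
proof -
  have "x \<bullet> y = (\<Sum>b\<in>Basis. (x \<bullet> b) * (y \<bullet> b))" by (rule euclidean_inner)
  also have "\<dots> = (x \<bullet> b1) * (y \<bullet> b1) + (x \<bullet> b2) * (y \<bullet> b2)" unfolding B using B12 by simp
  finally show ?thesis by (simp add: inner2)
qed

lemma to_norm: "norm (toC b1 b2 x) = norm x"
  using to_inner[of x x] by (simp add: norm_eq_sqrt_inner)

lemma fr_inner: "frC b1 b2 x \<bullet> frC b1 b2 y = x \<bullet> y"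
  using to_inner[of "frC b1 b2 x" "frC b1 b2 y"] by (simp add: to_fr)

lemma fr_norm: "norm (frC b1 b2 y) = norm y"
  using to_norm[of "frC b1 b2 y"] by (simp add: to_fr)

lemma lin_to: "linear (toC b1 b2)"
  by (rule linearI) (simp_all add: vec_eq_iff forall_2 inner_add_left)

lemma lin_fr: "linear (frC b1 b2)"
  by (rule linearI) (simp_all add: frC_def algebra_simps)

lemma cont_to: "continuous_on UNIV (toC b1 b2)"
  using lin_to by (simp add: linear_continuous_on linear_conv_bounded_linear)

lemma cont_fr: "continuous_on UNIV (frC b1 b2)"
  using lin_fr by (simp add: linear_continuous_on linear_conv_bounded_linear)

lemma prod_Basis2: "(\<Prod>b\<in>(Basis::(real^2) set). g b) = g (axis 1 1) * g (axis 2 1)"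
proof -
  have eq: "(Basis::(real^2) set) = {axis 1 1, axis 2 1}"
    by (auto simp: Basis_vec_def) (metis exhaust_2)
  have "axis (1::2) (1::real) \<noteq> axis 2 1" by (simp add: axis_eq_axis)
  then show ?thesis unfolding eq by simp
qed

lemma distr_to: "distr lborel borel (toC b1 b2) = (lborel :: (real^2) measure)"
proof -
  have meas: "toC b1 b2 \<in> measurable lborel borel"
    using cont_to by (simp add: borel_measurable_continuous_onI)
  have "(lborel :: (real^2) measure) = distr lborel borel (toC b1 b2)"
  proof (rule lborel_eqI)
    fix l u :: "real^2"
    assume lu: "\<And>b. b \<in> Basis \<Longrightarrow> l \<bullet> b \<le> u \<bullet> b"
    have l1: "l$1 \<le> u$1" using lu[of "axis 1 1"] by (simp add: cart_eq_inner_axis Basis_vec_def) (metis)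
    have l2: "l$2 \<le> u$2" using lu[of "axis 2 1"] by (simp add: cart_eq_inner_axis Basis_vec_def) (metis)
    have pre: "toC b1 b2 -` box l u \<inter> space lborel = box (frC b1 b2 l) (frC b1 b2 u)"
    proof -
      have "x \<in> box (frC b1 b2 l) (frC b1 b2 u) \<longleftrightarrow> toC b1 b2 x \<in> box l u" for x
        unfolding mem_box_cart mem_box B
        by (simp add: forall_2 frC_def inner_add_right bb inner_commute)
      then show ?thesis by auto
    qed
    have "emeasure (distr lborel borel (toC b1 b2)) (box l u) = emeasure lborel (box (frC b1 b2 l) (frC b1 b2 u))"
      using emeasure_distr[OF meas, of "box l u"] pre by simp
    also have "\<dots> = ennreal ((u$1 - l$1) * (u$2 - l$2))"
      using B12 l1 l2
      apply (subst emeasure_lborel_box_eq)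
      apply (simp only: allB prodB)
      apply (simp add: frC_def inner_diff_left inner_add_left bb)
      done
    also have "\<dots> = ennreal (\<Prod>b\<in>Basis. (u - l) \<bullet> b)"
      unfolding prod_Basis2 by (simp add: cart_eq_inner_axis[symmetric])
    finally show "emeasure (distr lborel borel (toC b1 b2)) (box l u) = (\<Prod>b\<in>Basis. (u - l) \<bullet> b)" .
  next
    show "sets (distr lborel borel (toC b1 b2)) = sets borel" by simp
  qed
  then show ?thesis by simp
qed

lemma meas_to:
  assumes K: "compact K"
  shows "measure lebesgue (toC b1 b2 ` K) = measure lebesgue K"
proof -
  have meas: "toC b1 b2 \<in> measurable lborel borel"
    using cont_to by (simp add: borel_measurable_continuous_onI)
  have cK: "compact (toC b1 b2 ` K)" using K cont_to by (intro compact_continuous_image) (auto intro: continuous_on_subset)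
  then have bK: "toC b1 b2 ` K \<in> sets borel" by (simp add: compact_imp_closed borel_closed)
  have bK0: "K \<in> sets borel" using K by (simp add: compact_imp_closed borel_closed)
  have inj: "inj (toC b1 b2)" by (metis fr_to injI)
  have "measure lebesgue (toC b1 b2 ` K) = measure lborel (toC b1 b2 ` K)" using bK by simp
  also have "\<dots> = measure (distr lborel borel (toC b1 b2)) (toC b1 b2 ` K)" by (simp add: distr_to)
  also have "\<dots> = measure lborel (toC b1 b2 -` (toC b1 b2 ` K) \<inter> space lborel)"
    by (rule measure_distr[OF meas bK])
  also have "toC b1 b2 -` (toC b1 b2 ` K) \<inter> space lborel = K" using inj by (auto dest: injD)
  also have "measure lborel K = measure lebesgue K" using bK0 by simp
  finally show ?thesis .
qed

lemma meas_fr: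
  assumes K: "compact K"
  shows "measure lebesgue (frC b1 b2 ` K) = measure lebesgue K"
proof -
  have cK: "compact (frC b1 b2 ` K)" using K cont_fr by (intro compact_continuous_image) (auto intro: continuous_on_subset)
  have "toC b1 b2 ` (frC b1 b2 ` K) = K" by (simp add: image_image to_fr)
  then show ?thesis using meas_to[OF cK] by simp
qed

end



lemma ell_compact: "is_ellipse (F::'a::euclidean_space set) \<Longrightarrow> compact F"
proof -
  assume "is_ellipse F"
  then obtain c f where lf: "linear f" and F: "F = (\<lambda>x. c + f x) ` cball (0::'a) 1"
    unfolding is_ellipse_def by blast
  have "continuous_on UNIV (\<lambda>x. c + f x)"
    using lf by (intro continuous_intros) (simp add: linear_continuous_on linear_conv_bounded_linear)
  then show "compact F" unfolding F by (intro compact_continuous_image) (auto intro: continuous_on_subset)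
qed

lemma ell_img:
  fixes g :: "'a::euclidean_space \<Rightarrow> 'b::euclidean_space" and h :: "'b \<Rightarrow> 'a"
  assumes lg: "linear g" and lh: "linear h" and hg: "\<And>x. h (g x) = x" and gh: "\<And>y. g (h y) = y"
    and ng: "\<And>x. norm (g x) = norm x" and F: "is_ellipse F"
  shows "is_ellipse (g ` F)"
proof -
  obtain c f where lf: "linear f" and inf: "inj f" and Fe: "F = (\<lambda>x. c + f x) ` cball (0::'a) 1"
    using F unfolding is_ellipse_def by blast
  have nh: "norm (h y) = norm y" for y using ng[of "h y"] gh by simp
  have "g ` F = (\<lambda>y. g c + (g \<circ> f \<circ> h) y) ` cball 0 1"
  proof
    show "g ` F \<subseteq> (\<lambda>y. g c + (g \<circ> f \<circ> h) y) ` cball 0 1"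
    proof
      fix w assume "w \<in> g ` F"
      then obtain x where x: "norm x \<le> 1" "w = g (c + f x)" using Fe by auto
      then have "w = g c + (g \<circ> f \<circ> h) (g x)" using hg linear_add[OF lg] by simp
      moreover have "g x \<in> cball 0 1" using x ng by simp
      ultimately show "w \<in> (\<lambda>y. g c + (g \<circ> f \<circ> h) y) ` cball 0 1" by blast
    qed
  next
    show "(\<lambda>y. g c + (g \<circ> f \<circ> h) y) ` cball 0 1 \<subseteq> g ` F"
    proof
      fix w assume "w \<in> (\<lambda>y. g c + (g \<circ> f \<circ> h) y) ` cball 0 1"
      then obtain y where y: "norm y \<le> 1" "w = g c + g (f (h y))" by auto
      then have "w = g (c + f (h y))" using linear_add[OF lg] by simp
      moreover have "c + f (h y) \<in> F" using Fe y nh by auto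
      ultimately show "w \<in> g ` F" by blast
    qed
  qed
  moreover have "linear (g \<circ> f \<circ> h)" using lg lf lh by (intro linear_compose) auto
  moreover have "inj (g \<circ> f \<circ> h)"
  proof -
    have "inj g" by (rule injI) (metis hg)
    moreover have "inj h" by (rule injI) (metis gh)
    ultimately show ?thesis using inf by (intro inj_compose)
  qed
  ultimately show ?thesis unfolding is_ellipse_def by blast
qed

lemma cball_ell: "is_ellipse (cball (0::'a::euclidean_space) 1)"
  unfolding is_ellipse_def by (rule exI[of _ 0], rule exI[of _ id]) (auto simp: linear_id)

lemma john_iff:
  fixes B :: "'a::euclidean_space set"
  assumes "cball 0 1 \<subseteq> B"
  shows "is_john_ellipse B (cball 0 1) \<longleftrightarrow>
    (\<forall>F. is_ellipse F \<and> F \<subseteq> B \<longrightarrow> measure lebesgue F \<le> measure lebesgue (cball (0::'a) 1))"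
  using assms cball_ell unfolding is_john_ellipse_def by blast

theorem theorem2p1:
  fixes N :: "'a::euclidean_space \<Rightarrow> real"
  assumes "DIM('a) = 2"
    and "is_norm N"
    and "\<And>x. N x \<le> norm x"
  shows "is_john_ellipse {x. N x \<le> 1} (cball 0 1) \<longleftrightarrow>
    (\<exists>v0 v1 v2 :: 'a.
       norm v0 = 1 \<and> N v0 = 1 \<and> norm v1 = 1 \<and> N v1 = 1 \<and>
       norm v2 = 1 \<and> N v2 = 1 \<and>
       v0 \<bullet> v1 \<ge> 0 \<and> v1 \<bullet> v2 \<ge> 0 \<and> v2 \<bullet> (- v0) \<ge> 0)"
proof -
  note n = assms(2) and le = assms(3)
  obtain b1 b2 :: 'a where B: "Basis = {b1, b2}" and B12: "b1 \<noteq> b2" using basis2[OF assms(1)] by blast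
  define T where "T = toC b1 b2"
  define S where "S = frC b1 b2"
  have ST: "S (T x) = x" for x unfolding S_def T_def by (rule fr_to[OF B B12])
  have TS: "T (S y) = y" for y unfolding S_def T_def by (rule to_fr[OF B B12])
  have Ti: "T x \<bullet> T y = x \<bullet> y" for x y unfolding T_def by (rule to_inner[OF B B12])
  have Si: "S x \<bullet> S y = x \<bullet> y" for x y unfolding S_def by (rule fr_inner[OF B B12])
  have Tn: "norm (T x) = norm x" for x unfolding T_def by (rule to_norm[OF B B12])
  have Sn: "norm (S x) = norm x" for x unfolding S_def by (rule fr_norm[OF B B12])
  have lT: "linear T" unfolding T_def by (rule lin_to[OF B B12])
  have lS: "linear S" unfolding S_def by (rule lin_fr[OF B B12])
  have mT: "measure lebesgue (T ` K) = measure lebesgue K" if "compact K" for K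
    unfolding T_def by (rule meas_to[OF B B12 that])
  have mS: "measure lebesgue (S ` K) = measure lebesgue K" if "compact K" for K
    unfolding S_def by (rule meas_fr[OF B B12 that])
  define N' where "N' y = N (S y)" for y
  have n': "is_norm N'"
    unfolding is_norm_def N'_def
  proof (intro conjI allI)
    fix x show "0 \<le> N (S x)" by (rule isn_nonneg[OF n])
  next
    fix x show "N (S x) = 0 \<longleftrightarrow> x = 0"
    proof
      assume "N (S x) = 0"
      then have "S x = 0" using n unfolding is_norm_def by blast
      then have "T (S x) = T 0" by simp
      then show "x = 0" using TS linear_0[OF lT] by simp
    next
      assume "x = 0" then show "N (S x) = 0" using n linear_0[OF lS] unfolding is_norm_def by simp
    qed
  next
    fix a x show "N (S (a *\<^sub>R x)) = \<bar>a\<bar> * N (S x)"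
      using isn_scale[OF n] linear_scale[OF lS] by simp
  next
    fix x y show "N (S (x + y)) \<le> N (S x) + N (S y)"
      using isn_tri[OF n] linear_add[OF lS] by simp
  qed
  have le': "N' y \<le> norm y" for y unfolding N'_def using le[of "S y"] Sn by simp
  have M2: "is_john_ellipse {x. N' x \<le> 1} (cball 0 1) \<longleftrightarrow> JC N'" by (rule main2[OF n' le'])
  have subB: "cball 0 1 \<subseteq> {x::'a. N x \<le> 1}"
  proof clarify
    fix x :: 'a assume "x \<in> cball 0 1" then show "N x \<le> 1" using le[of x] by simp
  qed
  have subB': "cball 0 1 \<subseteq> {x::real^2. N' x \<le> 1}"
  proof clarify
    fix x :: "real^2" assume "x \<in> cball 0 1" then show "N' x \<le> 1" using le'[of x] by simp
  qed
  have TD: "T ` cball 0 1 = cball 0 1"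
  proof
    show "T ` cball 0 1 \<subseteq> cball 0 1" using Tn by auto
    show "cball 0 1 \<subseteq> T ` cball 0 1"
    proof
      fix y :: "real^2" assume "y \<in> cball 0 1"
      then have "S y \<in> cball 0 1" using Sn by simp
      then show "y \<in> T ` cball 0 1" using TS by (metis image_eqI)
    qed
  qed
  have mD: "measure lebesgue (cball (0::real^2) 1) = measure lebesgue (cball (0::'a) 1)"
    using mT[of "cball 0 1"] TD by simp
  have LHS: "is_john_ellipse {x. N x \<le> 1} (cball 0 1) \<longleftrightarrow> is_john_ellipse {x. N' x \<le> 1} (cball 0 1)"
    unfolding john_iff[OF subB] john_iff[OF subB']
  proof safe
    fix F' :: "(real^2) set"
    assume H: "\<forall>F. is_ellipse F \<and> F \<subseteq> {x. N x \<le> 1} \<longrightarrow> measure lebesgue F \<le> measure lebesgue (cball (0::'a) 1)"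
      and F': "is_ellipse F'" "F' \<subseteq> {x. N' x \<le> 1}"
    have eF: "is_ellipse (S ` F')" by (rule ell_img[OF lS lT TS ST Sn F'(1)])
    have sF: "S ` F' \<subseteq> {x. N x \<le> 1}" using F'(2) N'_def by auto
    have "measure lebesgue (S ` F') \<le> measure lebesgue (cball (0::'a) 1)" using H eF sF by blast
    then show "measure lebesgue F' \<le> measure lebesgue (cball (0::real^2) 1)"
      using mS[OF ell_compact[OF F'(1)]] mD by simp
  next
    fix F :: "'a set"
    assume H: "\<forall>F. is_ellipse F \<and> F \<subseteq> {x. N' x \<le> 1} \<longrightarrow> measure lebesgue F \<le> measure lebesgue (cball (0::real^2) 1)"
      and F: "is_ellipse F" "F \<subseteq> {x. N x \<le> 1}"
    have eF: "is_ellipse (T ` F)" by (rule ell_img[OF lT lS ST TS Tn F(1)])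
    have sF: "T ` F \<subseteq> {x. N' x \<le> 1}" using F(2) N'_def ST by auto
    have "measure lebesgue (T ` F) \<le> measure lebesgue (cball (0::real^2) 1)" using H eF sF by blast
    then show "measure lebesgue F \<le> measure lebesgue (cball (0::'a) 1)"
      using mT[OF ell_compact[OF F(1)]] mD by simp
  qed
  have RHS: "(\<exists>v0 v1 v2 :: 'a.
       norm v0 = 1 \<and> N v0 = 1 \<and> norm v1 = 1 \<and> N v1 = 1 \<and>
       norm v2 = 1 \<and> N v2 = 1 \<and>
       v0 \<bullet> v1 \<ge> 0 \<and> v1 \<bullet> v2 \<ge> 0 \<and> v2 \<bullet> (- v0) \<ge> 0) \<longleftrightarrow> JC N'"
  proof
    assume "\<exists>v0 v1 v2 :: 'a.
       norm v0 = 1 \<and> N v0 = 1 \<and> norm v1 = 1 \<and> N v1 = 1 \<and>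
       norm v2 = 1 \<and> N v2 = 1 \<and>
       v0 \<bullet> v1 \<ge> 0 \<and> v1 \<bullet> v2 \<ge> 0 \<and> v2 \<bullet> (- v0) \<ge> 0"
    then obtain v0 v1 v2 :: 'a where v: "norm v0 = 1" "N v0 = 1" "norm v1 = 1" "N v1 = 1"
       "norm v2 = 1" "N v2 = 1" "v0 \<bullet> v1 \<ge> 0" "v1 \<bullet> v2 \<ge> 0" "v2 \<bullet> (- v0) \<ge> 0" by blast
    show "JC N'" unfolding JC_def
      by (rule exI[of _ "T v0"], rule exI[of _ "T v1"], rule exI[of _ "T v2"])
        (use v in \<open>simp add: Tn N'_def ST Ti linear_neg[OF lT, symmetric]\<close>)
  next
    assume "JC N'"
    then obtain v0 v1 v2 :: "real^2" where v: "norm v0 = 1" "N' v0 = 1" "norm v1 = 1" "N' v1 = 1"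
       "norm v2 = 1" "N' v2 = 1" "v0 \<bullet> v1 \<ge> 0" "v1 \<bullet> v2 \<ge> 0" "v2 \<bullet> (- v0) \<ge> 0"
      unfolding JC_def by blast
    show "\<exists>v0 v1 v2 :: 'a.
       norm v0 = 1 \<and> N v0 = 1 \<and> norm v1 = 1 \<and> N v1 = 1 \<and>
       norm v2 = 1 \<and> N v2 = 1 \<and>
       v0 \<bullet> v1 \<ge> 0 \<and> v1 \<bullet> v2 \<ge> 0 \<and> v2 \<bullet> (- v0) \<ge> 0"
      by (rule exI[of _ "S v0"], rule exI[of _ "S v1"], rule exI[of _ "S v2"])
        (use v in \<open>simp add: Sn N'_def Si linear_neg[OF lS, symmetric]\<close>)
  qed
  show ?thesis using LHS RHS M2 by simp
qed


end
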